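(* Let $w=w_1\cdots w_n$ be a word of length $n\ge 3$, let $d\ge 1$, and let $G_w$ be any $(n,d)$-grid satisfying the rules below. Let $p\in[n]^d$ be a counter-point with $\tau_1(p)=r$. Then the number of directions $v\in\{-1,0,1\}^d\setminus\{\vec 0\}$ such that $\{p,p+v,\dots,p+(n-1)v\}\subseteq[n]^d$ and $G_w(p)G_w(p+v)\cdots G_w(p+(n-1)v)$ equals $w$ or $w$ reversed (i.e. the number of lines with initial point $p$ that contain $w$) is at least $(1-2e^{-c/10000})2^{r-1}$. If moreover $w_i=w_{n-i+1}$ for all $i$, this number is at least $(1-2e^{-c/10000})2^{r}$.
   Context: Let $[n]=\{1,\dots,n\}$. For $p\in[n]^d$ and $i\in[n]$ let $\pi_i(p)=|\{j\in[d]:p_j=i\}|$, $\tau_i(p)=\pi_i(p)+\pi_{n-i+1}(p)$, and $\sigma(p)=\sum_{1\le i\le n/2}\pi_i(p)$. Set $c=\frac{3.9d}{n+2}$ and $k=\frac{2.3d}{n+2}$. A point $p\in[n]^d$ is a counter-point if $c<\tau_1(p)<1.1c$ and $\frac{0.99(d-\tau_1(p))}{n-2}\le\pi_i(p)\le\frac{1.01(d-\tau_1(p))}{n-2}$ for all $1<i<n$. An $(n,d)$-grid is a function $G:[n]^d\to\Sigma$ into a set of letters. The grid $G_w$ is required to satisfy: if $\sigma(p)$ is odd, then $G_w(p)=w_1$ when $p$ is a counter-point, and $G_w(p)=w_i$ when $\tau_1(p)\le c$ and there is a unique integer $i$ with $1<i\le\lceil n/2\rceil$ and $\tau_i(p)\ge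 k$; if $\sigma(p)$ is even, then $G_w(p)=w_n$ when $p$ is a counter-point, and $G_w(p)=w_{n-i+1}$ when $\tau_1(p)\le c$ and there is a unique integer $i$ with $1<i\le\lceil n/2\rceil$ and $\tau_i(p)\ge k$; all other points are assigned arbitrary letters. *)

theory Defs
  imports Complex_Main
begin

text \<open>Points of [n]^d are integer lists of length d with entries in {1..n};
  coordinate j of the paper is list position j-1.  Words are lists, w_i = w!(i-1).\<close>

definition in_grid :: "nat \<Rightarrow> nat \<Rightarrow> int list \<Rightarrow> bool" where
  "in_grid n d p \<longleftrightarrow> length p = d \<and> (\<forall>x\<in>set p. 1 \<le> x \<and> x \<le> int n)"

definition pi_cnt :: "nat \<Rightarrow> int list \<Rightarrow> nat" where
  "pi_cnt i p = count_list p (int i)"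

definition tau :: "nat \<Rightarrow> nat \<Rightarrow> int list \<Rightarrow> nat" where
  "tau n i p = pi_cnt i p + pi_cnt (n - i + 1) p"

definition sigma :: "nat \<Rightarrow> int list \<Rightarrow> nat" where
  "sigma n p = (\<Sum>i\<in>{i. 1 \<le> i \<and> real i \<le> real n / 2}. pi_cnt i p)"

definition cval :: "nat \<Rightarrow> nat \<Rightarrow> real" where
  "cval n d = 3.9 * real d / (real n + 2)"

definition kval :: "nat \<Rightarrow> nat \<Rightarrow> real" where
  "kval n d = 2.3 * real d / (real n + 2)"

definition counter_point :: "nat \<Rightarrow> nat \<Rightarrow> int list \<Rightarrow> bool" where
  "counter_point n d p \<longleftrightarrow>
     cval n d < real (tau n 1 p) \<and> real (tau n 1 p) < 1.1 * cval n d \<and>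
     (\<forall>i. 1 < i \<and> i < n \<longrightarrow>
        0.99 * (real d - real (tau n 1 p)) / (real n - 2) \<le> real (pi_cnt i p) \<and>
        real (pi_cnt i p) \<le> 1.01 * (real d - real (tau n 1 p)) / (real n - 2))"

definition unique_heavy :: "nat \<Rightarrow> nat \<Rightarrow> int list \<Rightarrow> nat \<Rightarrow> bool" where
  "unique_heavy n d p i \<longleftrightarrow>
     (1 < i \<and> int i \<le> \<lceil>real n / 2\<rceil> \<and> real (tau n i p) \<ge> kval n d) \<and>
     (\<forall>j. 1 < j \<and> int j \<le> \<lceil>real n / 2\<rceil> \<and> real (tau n j p) \<ge> kval n d \<longrightarrow> j = i)"

definition grid_rules :: "nat \<Rightarrow> nat \<Rightarrow> 'a list \<Rightarrow> (int list \<Rightarrow> 'a) \<Rightarrow> bool" where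
  "grid_rules n d w G \<longleftrightarrow> (\<forall>p. in_grid n d p \<longrightarrow>
     (odd (sigma n p) \<longrightarrow>
        (counter_point n d p \<longrightarrow> G p = w ! 0) \<and>
        (\<forall>i. real (tau n 1 p) \<le> cval n d \<and> unique_heavy n d p i \<longrightarrow> G p = w ! (i - 1))) \<and>
     (even (sigma n p) \<longrightarrow>
        (counter_point n d p \<longrightarrow> G p = w ! (n - 1)) \<and>
        (\<forall>i. real (tau n 1 p) \<le> cval n d \<and> unique_heavy n d p i \<longrightarrow> G p = w ! (n - i))))"

definition directions :: "nat \<Rightarrow> int list set" where
  "directions d = {v. length v = d \<and> set v \<subseteq> {-1, 0, 1} \<and> v \<noteq> replicate d 0}"

definition line_pt :: "int list \<Rightarrow> int list \<Rightarrow> nat \<Rightarrow> int list" where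
  "line_pt p v t = map2 (\<lambda>a b. a + int t * b) p v"

definition line_contains :: "nat \<Rightarrow> nat \<Rightarrow> 'a list \<Rightarrow> (int list \<Rightarrow> 'a) \<Rightarrow> int list \<Rightarrow> int list \<Rightarrow> bool" where
  "line_contains n d w G p v \<longleftrightarrow>
     (\<forall>t<n. in_grid n d (line_pt p v t)) \<and>
     (map (\<lambda>t. G (line_pt p v t)) [0..<n] = w \<or> map (\<lambda>t. G (line_pt p v t)) [0..<n] = rev w)"

definition num_lines :: "nat \<Rightarrow> nat \<Rightarrow> 'a list \<Rightarrow> (int list \<Rightarrow> 'a) \<Rightarrow> int list \<Rightarrow> nat" where
  "num_lines n d w G p = card {v \<in> directions d. line_contains n d w G p v}"

end

theory Submission
  imports Defs
begin

lemma heavy_arith: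
  fixes N D R s x y :: real
  assumes "N \<ge> 3" "D \<ge> 1" "3.9*D/(N+2) < R" "R < 1.1*(3.9*D/(N+2))"
    "0.99*(D-R)/(N-2) \<le> x" "0.99*(D-R)/(N-2) \<le> y" "R \<le> 4*s"
  shows "2.3*D/(N+2) \<le> x + y + s"
proof -
  define u where "u = D/(N+2)"
  have u: "u > 0" using assms unfolding u_def by auto
  have Du: "D = u*(N+2)" using assms unfolding u_def by auto
  define z where "z = (D-R)/(N-2)"
  have zz: "D - R = z*(N-2)" using assms unfolding z_def by auto
  have R1: "3.9*u < R" "R < 4.29*u" using assms unfolding u_def by auto
  have "2*(0.99*z) + R/4 \<ge> 2.3*u"
  proof (cases "R \<le> 4*u")
    case True
    have "z*(N-2) \<ge> u*(N-2)" using zz Du True by (simp add: algebra_simps)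
    then have "z \<ge> u" using assms(1) by (simp add: mult_le_cancel_right)
    then show ?thesis using R1 u by (simp only: power2_eq_square; linarith)
  next
    case False
    have e: "(u - z)*(N-2) = R - 4*u" using zz Du by (simp add: algebra_simps)
    have "(u-z)*(N-2) > 0" using e False by simp
    moreover have "N - 2 > 0" using assms(1) by simp
    ultimately have "u - z \<ge> 0" by (simp add: zero_less_mult_iff)
    then have "(u - z)*1 \<le> (u-z)*(N-2)" using assms(1) by (intro mult_left_mono) auto
    then have "u - z \<le> R - 4*u" using e by simp
    then have "z \<ge> 5*u - R" by linarith
    then show ?thesis using R1 u by (simp only: power2_eq_square; linarith)
  qed
  moreover have "0.99*z \<le> x" "0.99*z \<le> y" using assms unfolding z_def by auto
  moreover have "2.3*D/(N+2) = 2.3*u" unfolding u_def by simp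
  ultimately show ?thesis using assms(7) by (simp only: power2_eq_square; linarith)
qed

lemma light_arith:
  fixes N D R x y :: real
  assumes "N \<ge> 3" "D \<ge> 1" "3.9*D/(N+2) < R"
    "x \<le> 1.01*(D-R)/(N-2)" "y \<le> 1.01*(D-R)/(N-2)"
  shows "x + y < 2.3*D/(N+2)"
proof -
  define u where "u = D/(N+2)"
  have u: "u > 0" using assms unfolding u_def by auto
  have Du: "D = u*(N+2)" using assms unfolding u_def by auto
  define z where "z = (D-R)/(N-2)"
  have zz: "D - R = z*(N-2)" using assms unfolding z_def by auto
  have R1: "3.9*u < R" using assms unfolding u_def by auto
  have h1: "z*(N-2) < u*(N-2) + 0.1*u" using zz Du R1 by (simp add: algebra_simps)
  have h2: "0.1*u \<le> 0.1*u*(N-2)" using u assms(1) by simp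
  have "z*(N-2) < (1.1*u)*(N-2)" using h1 h2 by (simp add: algebra_simps)
  then have "z < 1.1*u" using assms(1) by (simp add: mult_less_cancel_right)
  then have "2*(1.01*z) < 2.3*u" using u by (simp only: power2_eq_square; linarith)
  moreover have "x \<le> 1.01*z" "y \<le> 1.01*z" using assms unfolding z_def by auto
  ultimately show ?thesis unfolding u_def by simp
qed


lemma tail_bound:
  fixes r :: nat and c :: real
  assumes "c < real r"
  shows "real (\<Sum>k\<in>{k. k \<le> r \<and> 4*k < r}. r choose k) \<le> 2^r * exp (-c/10000)"
proof -
  define Q :: real where "Q = 2 powr (1/4)"
  have Q0: "Q > 0" unfolding Q_def by simp
  have Q4: "Q^4 = 2" unfolding Q_def
    by (simp add: powr_realpow[symmetric] powr_powr)
  have Q1: "Q \<ge> 1" unfolding Q_def by (rule ge_one_powr_ge_zero) auto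
  have Q12: "Q \<le> 1.2"
  proof (rule power_le_imp_le_base[where n=3])
    show "Q ^ Suc 3 \<le> 1.2 ^ Suc 3" using Q4 by (simp add: eval_nat_numeral)
  qed simp
  have tm: "real (r choose k) \<le> real (r choose k) * (Q^r * (1/2)^k)" if "4*k < r" for k
  proof -
    have "(2::real)^k = Q^(4*k)" using Q4 by (simp add: power_mult)
    also have "\<dots> \<le> Q^r" using Q1 that by (intro power_increasing) auto
    finally have "1 \<le> Q^r * (1/2)^k" by (simp add: field_simps)
    then show ?thesis by (simp add: mult_le_cancel_left1)
  qed
  have "real (\<Sum>k\<in>{k. k \<le> r \<and> 4*k < r}. r choose k) = (\<Sum>k\<in>{k. k \<le> r \<and> 4*k < r}. real (r choose k))"
    by simp
  also have "\<dots> \<le> (\<Sum>k\<in>{k. k \<le> r \<and> 4*k < r}. real (r choose k) * (Q^r * (1/2)^k))"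
    using tm by (intro sum_mono) auto
  also have "\<dots> \<le> (\<Sum>k\<le>r. real (r choose k) * (Q^r * (1/2)^k))"
    using Q0 by (intro sum_mono2) auto
  also have "\<dots> = Q^r * (\<Sum>k\<le>r. real (r choose k) * (1/2)^k * 1^(r-k))"
    by (simp add: sum_distrib_left algebra_simps)
  also have "\<dots> = Q^r * (1/2 + 1)^r" by (simp only: binomial_ring)
  also have "\<dots> = (1.5*Q)^r" by (simp add: power_mult_distrib[symmetric] mult.commute)
  also have "\<dots> \<le> (2 * exp (-1/10000))^r"
  proof (rule power_mono)
    have "1 + (-1/10000) \<le> exp (-1/10000::real)" by (rule exp_ge_add_one_self)
    then show "1.5*Q \<le> 2 * exp (-1/10000)" using Q12 by simp
  qed (use Q0 in simp)
  also have "\<dots> = 2^r * exp (real r * (-1/10000))"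
    by (simp only: power_mult_distrib exp_of_nat_mult)
  also have "\<dots> \<le> 2^r * exp (-c/10000)"
    using assms by simp
  finally show ?thesis .
qed

lemma card_subsets_P:
  assumes "finite A"
  shows "card {B. B \<subseteq> A \<and> P (card B)} = (\<Sum>k\<in>{k. k \<le> card A \<and> P k}. card A choose k)"
proof -
  have eq: "{B. B \<subseteq> A \<and> P (card B)} = (\<Union>k\<in>{k. k \<le> card A \<and> P k}. {B. B \<subseteq> A \<and> card B = k})"
    using assms by (auto intro: card_mono)
  have "card (\<Union>k\<in>{k. k \<le> card A \<and> P k}. {B. B \<subseteq> A \<and> card B = k})
      = (\<Sum>k\<in>{k. k \<le> card A \<and> P k}. card {B. B \<subseteq> A \<and> card B = k})"
    using assms by (intro card_UN_disjoint) (auto intro: finite_subset[of _ "Pow A"])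
  also have "\<dots> = (\<Sum>k\<in>{k. k \<le> card A \<and> P k}. card A choose k)"
    using assms by (simp add: n_subsets)
  finally show ?thesis using eq by simp
qed


lemma cnt_card: "pi_cnt x q = card {j. j < length q \<and> q!j = int x}"
  unfolding pi_cnt_def count_list_eq_length_filter length_filter_conv_card
  by (metis)

lemma card_ind: "card {j. j < (d::nat) \<and> P j} = (\<Sum>j<d. if P j then 1 else 0)"
proof -
  have "card {j. j < d \<and> P j} = sum (\<lambda>_. 1::nat) {j\<in>{..<d}. P j}" by simp
  also have "\<dots> = (\<Sum>j<d. if P j then 1 else 0)" by (subst sum.inter_filter[symmetric]) auto
  finally show ?thesis .
qed

definition vecS :: "int list \<Rightarrow> nat \<Rightarrow> nat set \<Rightarrow> int list" where
  "vecS p d S = map (\<lambda>j. if j \<in> S then (if p!j = 1 then 1 else -1) else 0) [0..<d]"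

lemma line_len: "length p = d \<Longrightarrow> length (line_pt p (vecS p d S) t) = d"
  by (simp add: line_pt_def vecS_def)

lemma line_nth: "length p = d \<Longrightarrow> j < d \<Longrightarrow>
  line_pt p (vecS p d S) t ! j = (if j \<in> S then (if p!j = 1 then 1 + int t else p!j - int t) else p!j)"
  by (simp add: line_pt_def vecS_def)


lemma key_count:
  assumes pl: "length p = d" and SJ: "S \<subseteq> {j. j < d \<and> (p!j = 1 \<or> p!j = int n)}" and tn: "t < n"
  shows "pi_cnt x (line_pt p (vecS p d S) t) + of_bool (x = 1) * card {j\<in>S. p!j = 1}
           + of_bool (x = n) * card {j\<in>S. p!j \<noteq> 1}
       = pi_cnt x p + of_bool (x = 1 + t) * card {j\<in>S. p!j = 1}
           + of_bool (x = n - t) * card {j\<in>S. p!j \<noteq> 1}"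
proof -
  let ?q = "line_pt p (vecS p d S) t"
  let ?A = "\<lambda>j. if j \<in> S \<and> p!j = 1 then 1 else (0::nat)"
  let ?B = "\<lambda>j. if j \<in> S \<and> p!j \<noteq> 1 then 1 else (0::nat)"
  have cA: "card {j\<in>S. p!j = 1} = (\<Sum>j<d. ?A j)"
  proof -
    have "card {j\<in>S. p!j = 1} = card {j. j < d \<and> (j \<in> S \<and> p!j = 1)}"
      using SJ by (intro arg_cong[where f=card]) auto
    then show ?thesis by (simp only: card_ind)
  qed
  have cB: "card {j\<in>S. p!j \<noteq> 1} = (\<Sum>j<d. ?B j)"
  proof -
    have "card {j\<in>S. p!j \<noteq> 1} = card {j. j < d \<and> (j \<in> S \<and> p!j \<noteq> 1)}"
      using SJ by (intro arg_cong[where f=card]) auto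
    then show ?thesis by (simp only: card_ind)
  qed
  have cq: "pi_cnt x ?q = (\<Sum>j<d. if ?q!j = int x then 1 else 0)"
    unfolding cnt_card line_len[OF pl] card_ind ..
  have cp: "pi_cnt x p = (\<Sum>j<d. if p!j = int x then 1 else 0)"
    unfolding cnt_card pl card_ind ..
  have pw: "\<And>j. j < d \<Longrightarrow>
     (if ?q!j = int x then 1 else 0) + of_bool (x = 1) * ?A j + of_bool (x = n) * ?B j
     = (if p!j = int x then 1 else 0) + of_bool (x = 1 + t) * ?A j + of_bool (x = n - t) * ?B j"
  proof -
    fix j assume j: "j < d"
    show "?thesis j"
    proof (cases "j \<in> S")
      case True
      then have pj: "p!j = 1 \<or> p!j = int n" using SJ by auto
      show ?thesis using True pj j pl tn by (auto simp: line_nth)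
    next
      case False then show ?thesis using j pl by (simp add: line_nth)
    qed
  qed
  have "(\<Sum>j<d. (if ?q!j = int x then 1 else 0) + of_bool (x = 1) * ?A j + of_bool (x = n) * ?B j)
     = (\<Sum>j<d. (if p!j = int x then 1 else 0) + of_bool (x = 1 + t) * ?A j + of_bool (x = n - t) * ?B j)"
    by (rule sum.cong[OF refl pw]) simp
  then show ?thesis
    unfolding cq cp cA cB sum.distrib sum_distrib_left .
qed


lemma ceil_half: "int j \<le> \<lceil>real n / 2\<rceil> \<longleftrightarrow> 2*j \<le> n+1"
proof -
  have "int j \<le> \<lceil>real n / 2\<rceil> \<longleftrightarrow> real_of_int (int j - 1) < real n / 2" by (simp add: le_ceiling_iff)
  also have "\<dots> \<longleftrightarrow> 2*j \<le> n+1" by linarith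
  finally show ?thesis .
qed

lemma line0: "length p = d \<Longrightarrow> line_pt p (vecS p d S) 0 = p"
  by (intro nth_equalityI) (auto simp: line_len line_nth)

lemma even_add_twice: "x + 2*a = y + (s::nat) \<Longrightarrow> odd x = odd (y + s)"
proof -
  assume h: "x + 2*a = y + s"
  have "odd (x + 2*a) = odd x" by simp
  then show ?thesis using h by simp
qed

context
  fixes n d r :: nat and w :: "'a list" and G :: "int list \<Rightarrow> 'a" and p :: "int list" and S :: "nat set"
  assumes lw: "length w = n" and n3: "n \<ge> 3" and d1: "d \<ge> 1" and gr: "grid_rules n d w G"
    and pg: "in_grid n d p" and cp: "counter_point n d p" and rr: "tau n 1 p = r"
    and SJ: "S \<subseteq> {j. j < d \<and> (p!j = 1 \<or> p!j = int n)}" and big: "r \<le> 4 * card S"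
begin

abbreviation "aa \<equiv> card {j\<in>S. p!j = 1}"
abbreviation "bb \<equiv> card {j\<in>S. p!j \<noteq> 1}"
abbreviation "qq t \<equiv> line_pt p (vecS p d S) t"

lemma pl: "length p = d" using pg by (simp add: in_grid_def)

lemma finS: "finite S" using SJ finite_subset[of S "{..<d}"] by auto

lemma sab: "card S = aa + bb"
proof -
  have "S = {j\<in>S. p!j = 1} \<union> {j\<in>S. p!j \<noteq> 1}" by auto
  then show ?thesis using finS by (metis (no_types, lifting) card_Un_disjoint disjoint_iff finite_Un mem_Collect_eq)
qed

lemma kc: "t < n \<Longrightarrow> pi_cnt x (qq t) + of_bool (x = 1) * aa + of_bool (x = n) * bb
       = pi_cnt x p + of_bool (x = 1 + t) * aa + of_bool (x = n - t) * bb"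
  using key_count[OF pl SJ] by blast

lemma qgrid: assumes t: "t < n" shows "in_grid n d (qq t)"
proof -
  have "\<forall>x\<in>set (qq t). 1 \<le> x \<and> x \<le> int n"
  proof
  fix x assume "x \<in> set (qq t)"
  then obtain j where j: "j < d" "x = qq t ! j" by (auto simp: in_set_conv_nth line_len[OF pl])
  have pj: "1 \<le> p!j \<and> p!j \<le> int n" using pg j(1) pl by (auto simp: in_grid_def)
  have "j \<in> S \<Longrightarrow> p!j = 1 \<or> p!j = int n" using SJ by auto
  then show "1 \<le> x \<and> x \<le> int n" using j pj t by (auto simp: line_nth[OF pl])
  qed
  then show ?thesis using line_len[OF pl] by (simp add: in_grid_def)
qed

lemma pi_inner: "t < n \<Longrightarrow> 1 < x \<Longrightarrow> x < n \<Longrightarrow>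
   pi_cnt x (qq t) = pi_cnt x p + of_bool (x = 1 + t) * aa + of_bool (x = n - t) * bb"
  using kc[of t x] by simp

lemma tau_n1: "tau n 1 q = pi_cnt 1 q + pi_cnt n q"
  using n3 by (simp add: tau_def)

lemma tau1_inner: "0 < t \<Longrightarrow> t < n - 1 \<Longrightarrow> tau n 1 (qq t) + card S = r"
proof -
  assume t: "0 < t" "t < n - 1"
  have "pi_cnt 1 (qq t) + aa = pi_cnt 1 p" using kc[of t 1] t n3 by simp
  moreover have "pi_cnt n (qq t) + bb = pi_cnt n p" using kc[of t n] t n3 by simp
  moreover have "tau n 1 (qq t) = pi_cnt 1 (qq t) + pi_cnt n (qq t)" "tau n 1 p = pi_cnt 1 p + pi_cnt n p"
    by (rule tau_n1)+
  ultimately show ?thesis using rr sab by linarith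
qed

lemma tau1_end: "tau n 1 (qq (n-1)) = r"
proof -
  have "pi_cnt 1 (qq (n-1)) + aa = pi_cnt 1 p + bb" using kc[of "n-1" 1] n3 by simp
  moreover have "pi_cnt n (qq (n-1)) + bb = pi_cnt n p + aa" using kc[of "n-1" n] n3 by simp
  moreover have "tau n 1 (qq (n-1)) = pi_cnt 1 (qq (n-1)) + pi_cnt n (qq (n-1))" "tau n 1 p = pi_cnt 1 p + pi_cnt n p"
    by (rule tau_n1)+
  ultimately show ?thesis using rr by linarith
qed

lemma cp_end: "counter_point n d (qq (n-1))"
proof -
  have "\<And>x. 1 < x \<Longrightarrow> x < n \<Longrightarrow> pi_cnt x (qq (n-1)) = pi_cnt x p"
    using pi_inner n3 by auto
  then show ?thesis using cp tau1_end rr unfolding counter_point_def by auto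
qed

lemma of_bool_sum: "finite X \<Longrightarrow> (\<Sum>x\<in>X. of_bool (x = y) * (c::nat)) = of_bool (y \<in> X) * c"
proof -
  assume f: "finite X"
  have "(\<Sum>x\<in>X. of_bool (x = y) * c) = (\<Sum>x\<in>X. if x = y then c else 0)" by (intro sum.cong) auto
  also have "\<dots> = (if y \<in> X then c else 0)" using f by (simp add: sum.delta')
  finally show ?thesis by simp
qed

lemma sigma_q: "t < n \<Longrightarrow> sigma n (qq t) + aa = sigma n p + of_bool (2*(1+t) \<le> n) * aa + of_bool (2*(n-t) \<le> n) * bb"
proof -
  assume t: "t < n"
  define X where "X = {i::nat. 1 \<le> i \<and> real i \<le> real n / 2}"
  have X: "X = {i. 1 \<le> i \<and> 2*i \<le> n}" unfolding X_def by auto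
  have fX: "finite X" unfolding X by (rule finite_subset[of _ "{..n}"]) auto
  have "(\<Sum>x\<in>X. pi_cnt x (qq t) + of_bool (x = 1) * aa + of_bool (x = n) * bb)
      = (\<Sum>x\<in>X. pi_cnt x p + of_bool (x = 1 + t) * aa + of_bool (x = n - t) * bb)"
    using kc[OF t] by (intro sum.cong) auto
  then have "sigma n (qq t) + of_bool (1 \<in> X) * aa + of_bool (n \<in> X) * bb
      = sigma n p + of_bool (1 + t \<in> X) * aa + of_bool (n - t \<in> X) * bb"
    unfolding sum.distrib of_bool_sum[OF fX] sigma_def X_def[symmetric] .
  moreover have "1 \<in> X" "n \<notin> X" using n3 unfolding X by auto
  moreover have "(1 + t \<in> X) = (2*(1+t) \<le> n)" "(n - t \<in> X) = (2*(n-t) \<le> n)" using t unfolding X by auto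
  ultimately show ?thesis by simp
qed


lemma cpc: "cval n d < real r" "real r < 1.1 * cval n d"
  using cp rr unfolding counter_point_def by auto

lemma cpb: "1 < i \<Longrightarrow> i < n \<Longrightarrow> 0.99*(real d - real r)/(real n - 2) \<le> real (pi_cnt i p)
    \<and> real (pi_cnt i p) \<le> 1.01*(real d - real r)/(real n - 2)"
  using cp rr unfolding counter_point_def by auto

lemma cpos: "cval n d > 0" using d1 unfolding cval_def by auto

lemma interior:
  assumes t: "0 < t" "t < n - 1"
  shows "real (tau n 1 (qq t)) \<le> cval n d \<and> unique_heavy n d (qq t) (min (t+1) (n-t))"
proof
  have "tau n 1 (qq t) + card S = r" using tau1_inner t by blast
  then show "real (tau n 1 (qq t)) \<le> cval n d" using big cpc cpos by linarith
next
  define i where "i = min (t+1) (n-t)"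
  have i1: "1 < i" "2*i \<le> n+1" "i < n" using t n3 unfolding i_def min_def by auto
  have tn: "t < n" using t by auto
  have ii: "(i = t+1 \<and> n-i+1 = n-t) \<or> (i = n-t \<and> n-i+1 = t+1)" using t unfolding i_def by auto
  have in2: "1 < n-i+1" "n-i+1 < n" using i1 by auto
  have tq: "tau n i (qq t) = pi_cnt i (qq t) + pi_cnt (n-i+1) (qq t)" by (simp add: tau_def)
  have "tau n i (qq t) \<ge> pi_cnt i p + pi_cnt (n-i+1) p + card S"
    using ii unfolding tq pi_inner[OF tn i1(1) i1(3)] pi_inner[OF tn in2] sab by auto
  then have "real (tau n i (qq t)) \<ge> real (pi_cnt i p) + real (pi_cnt (n-i+1) p) + real (card S)" by linarith
  moreover have "2.3*real d/(real n+2) \<le> real (pi_cnt i p) + real (pi_cnt (n-i+1) p) + real (card S)"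
    apply (rule heavy_arith)
    using n3 d1 cpc cpb[OF i1(1) i1(3)] cpb[OF in2] big by (auto simp: cval_def)
  ultimately have heavy: "kval n d \<le> real (tau n i (qq t))" unfolding kval_def by linarith
  have others: "j = i" if j: "1 < j" "int j \<le> \<lceil>real n / 2\<rceil>" "kval n d \<le> real (tau n j (qq t))" for j
  proof (rule ccontr)
    assume ji: "j \<noteq> i"
    have j2: "2*j \<le> n+1" using j(2) by (simp add: ceil_half)
    have jn: "j < n" "1 < n-j+1" "n-j+1 < n" using j(1) j2 n3 by auto
    have ne: "j \<noteq> 1+t" "j \<noteq> n-t" "n-j+1 \<noteq> 1+t" "n-j+1 \<noteq> n-t"
      using ji j2 jn t unfolding i_def by auto
    have A: "pi_cnt j (qq t) = pi_cnt j p" using pi_inner[OF tn j(1) jn(1)] ne by simp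
    have B: "pi_cnt (n-j+1) (qq t) = pi_cnt (n-j+1) p" using pi_inner[OF tn jn(2) jn(3)] ne(3,4) by simp
    have tj: "tau n j (qq t) = pi_cnt j p + pi_cnt (n-j+1) p"
      unfolding tau_def A B ..
    then have "real (tau n j (qq t)) = real (pi_cnt j p) + real (pi_cnt (n-j+1) p)" by simp
    moreover have "real (pi_cnt j p) + real (pi_cnt (n-j+1) p) < 2.3*real d/(real n+2)"
      apply (rule light_arith)
      using n3 d1 cpc cpb[OF j(1) jn(1)] cpb[OF jn(2) jn(3)] by (auto simp: cval_def)
    ultimately show False using j(3) unfolding kval_def by linarith
  qed
  show "unique_heavy n d (qq t) (min (t+1) (n-t))"
  proof -
    have "1 < i \<and> int i \<le> \<lceil>real n / 2\<rceil> \<and> real (tau n i (qq t)) \<ge> kval n d"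
      using i1 heavy by (simp add: ceil_half)
    then show ?thesis unfolding unique_heavy_def i_def[symmetric] using others by blast
  qed
qed

lemma G_cp: "in_grid n d q \<Longrightarrow> counter_point n d q \<Longrightarrow> G q = (if odd (sigma n q) then w!0 else w!(n-1))"
  using gr unfolding grid_rules_def by auto

lemma G_in: "in_grid n d q \<Longrightarrow> real (tau n 1 q) \<le> cval n d \<Longrightarrow> unique_heavy n d q i \<Longrightarrow>
   G q = (if odd (sigma n q) then w!(i-1) else w!(n-i))"
  using gr unfolding grid_rules_def by auto

lemma Gq:
  assumes tn: "t < n"
  shows "G (qq t) = (if 2*(t+1) \<le> n then (if odd (sigma n p) then w!t else w!(n-1-t))
                     else (if odd (sigma n p + card S) then w!(n-1-t) else w!t))"
proof -
  have sq: "sigma n (qq t) + aa = sigma n p + of_bool (2*(1+t) \<le> n) * aa + of_bool (2*(n-t) \<le> n) * bb"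
    using sigma_q[OF tn] .
  consider "t = 0" | "t = n - 1" | "0 < t \<and> t < n - 1" using tn by linarith
  then show ?thesis
  proof cases
    case 1
    then show ?thesis using G_cp[OF pg cp] n3 line0[OF pl] by simp
  next
    case 2
    have "sigma n (qq t) + 2*aa = sigma n p + card S" using sq 2 n3 sab by simp
    then have "odd (sigma n (qq t)) = odd (sigma n p + card S)" by (rule even_add_twice)
    moreover have "G (qq t) = (if odd (sigma n (qq t)) then w!0 else w!(n-1))"
      using G_cp[OF qgrid[OF tn]] cp_end 2 by simp
    ultimately show ?thesis using 2 n3 by auto
  next
    case 3
    define i where "i = min (t+1) (n-t)"
    have G: "G (qq t) = (if odd (sigma n (qq t)) then w!(i-1) else w!(n-i))"
      using G_in[OF qgrid[OF tn]] interior 3 unfolding i_def by blast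
    consider "2*(t+1) \<le> n" | "\<not> 2*(t+1) \<le> n" "2*(n-t) \<le> n" | "\<not> 2*(t+1) \<le> n" "\<not> 2*(n-t) \<le> n" by blast
    then show ?thesis
    proof cases
      case 1
      have "sigma n (qq t) = sigma n p" using sq 1 by simp
      moreover have "i = t+1" using 1 unfolding i_def by simp
      ultimately show ?thesis using G 1 by (simp add: algebra_simps)
    next
      case 2
      have "sigma n (qq t) + 2*aa = sigma n p + card S" using sq 2 sab by simp
      then have "odd (sigma n (qq t)) = odd (sigma n p + card S)" by (rule even_add_twice)
      moreover have "i = n-t" using 2 unfolding i_def by simp
      moreover have "n - (n - t) = t" "n - t - 1 = n - 1 - t" using tn by auto
      ultimately show ?thesis using G 2 by simp
    next
      case c3: 3
      have n2: "n = 2*t+1" using c3 by arith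
      have ii: "i = t+1" unfolding i_def min_def using n2 by simp
      have e: "i - 1 = t" "n - i = t" "n - 1 - t = t" using n2 ii by auto
      show ?thesis using G c3 unfolding e by simp
    qed
  qed
qed


lemma line_good:
  assumes h: "odd (card S) \<or> (\<forall>i. 1 \<le> i \<and> i \<le> n \<longrightarrow> w!(i-1) = w!(n-i))"
  shows "line_contains n d w G p (vecS p d S)"
proof -
  let ?m = "map (\<lambda>t. G (qq t)) [0..<n]"
  have lm: "length ?m = n" by simp
  have "?m = w \<or> ?m = rev w"
  proof (cases "\<forall>i. 1 \<le> i \<and> i \<le> n \<longrightarrow> w!(i-1) = w!(n-i)")
    case True
    have "?m = w"
    proof (rule nth_equalityI)
      show "length ?m = length w" using lw by simp
      fix t assume "t < length ?m"
      then have tn: "t < n" by simp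
      have "w!t = w!(n-1-t)" using True[rule_format, of "t+1"] tn by (simp add: algebra_simps)
      then show "?m ! t = w ! t" using Gq[OF tn] tn by auto
    qed
    then show ?thesis ..
  next
    case False
    then have os: "odd (card S)" using h by blast
    show ?thesis
    proof (cases "odd (sigma n p)")
      case True
      have "?m = w"
      proof (rule nth_equalityI)
        show "length ?m = length w" using lw by simp
        fix t assume "t < length ?m"
        then have tn: "t < n" by simp
        show "?m ! t = w ! t" using Gq[OF tn] tn True os by auto
      qed
      then show ?thesis ..
    next
      case False
      have "?m = rev w"
      proof (rule nth_equalityI)
        show "length ?m = length (rev w)" using lw by simp
        fix t assume "t < length ?m"
        then have tn: "t < n" by simp
        have "rev w ! t = w ! (n-1-t)" using lw tn by (simp add: rev_nth)
        then show "?m ! t = rev w ! t" using Gq[OF tn] tn False os by auto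
      qed
      then show ?thesis ..
    qed
  qed
  then show ?thesis unfolding line_contains_def using qgrid by blast
qed

end

lemma sum_filter_real: "real (\<Sum>k\<in>{k. k \<le> r \<and> P k}. r choose k) = (\<Sum>k\<le>r. if P k then real (r choose k) else 0)"
proof -
  have eq: "{k. k \<le> r \<and> P k} = {k\<in>{..r}. P k}" by auto
  have "real (\<Sum>k\<in>{k. k \<le> r \<and> P k}. r choose k) = (\<Sum>k\<in>{k\<in>{..r}. P k}. real (r choose k))"
    by (simp only: eq of_nat_sum)
  also have "\<dots> = (\<Sum>k\<le>r. if P k then real (r choose k) else 0)" by (rule sum.inter_filter) simp
  finally show ?thesis .
qed

lemma count_lb:
  fixes w :: "'a list" and n d r :: nat and G :: "int list \<Rightarrow> 'a" and p :: "int list"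
  assumes lw: "length w = n" and n3: "n \<ge> 3" and d1: "d \<ge> 1"
    and gr: "grid_rules n d w G"
    and pg: "in_grid n d p" and cp: "counter_point n d p" and rr: "tau n 1 p = r"
    and PP: "\<And>k. P k \<Longrightarrow> r \<le> 4*k \<and> (odd k \<or> (\<forall>i. 1 \<le> i \<and> i \<le> n \<longrightarrow> w!(i-1) = w!(n-i)))"
  shows "(\<Sum>k\<le>r. if P k then real (r choose k) else 0) \<le> real (num_lines n d w G p)"
proof -
  have pl: "length p = d" using pg by (simp add: in_grid_def)
  define J where "J = {j. j < d \<and> (p!j = 1 \<or> p!j = int n)}"
  have J: "J = {j. j < length p \<and> p!j = int 1} \<union> {j. j < length p \<and> p!j = int n}"
    unfolding J_def pl by auto
  have fJ: "finite J" unfolding J_def by (rule finite_subset[of _ "{..<d}"]) auto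
  have cJ: "card J = r"
  proof -
    have "card J = pi_cnt 1 p + pi_cnt n p" unfolding J cnt_card
      using n3 by (intro card_Un_disjoint) auto
    also have "\<dots> = tau n 1 p" using n3 by (simp add: tau_def)
    finally show ?thesis using rr by simp
  qed
  have r1: "r \<ge> 1"
  proof -
    have "cval n d > 0" using d1 unfolding cval_def by auto
    moreover have "cval n d < real r" using cp rr unfolding counter_point_def by auto
    ultimately show ?thesis by linarith
  qed
  define GS where "GS = {S. S \<subseteq> J \<and> P (card S)}"
  have sub: "vecS p d ` GS \<subseteq> {v \<in> directions d. line_contains n d w G p v}"
  proof
    fix v assume "v \<in> vecS p d ` GS"
    then obtain S where S: "S \<subseteq> J" "P (card S)" and v: "v = vecS p d S" unfolding GS_def by auto
    have big: "r \<le> 4 * card S" and h: "odd (card S) \<or> (\<forall>i. 1 \<le> i \<and> i \<le> n \<longrightarrow> w!(i-1) = w!(n-i))"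
      using PP[OF S(2)] by auto
    have lc: "line_contains n d w G p v"
      unfolding v using line_good[OF lw n3 d1 gr pg cp rr _ big h] S(1) unfolding J_def by blast
    have "S \<noteq> {}" using big r1 by (auto)
    then obtain j where j: "j \<in> S" by auto
    then have jd: "j < d" using S(1) unfolding J_def by auto
    have "v ! j \<noteq> 0" using j jd unfolding v vecS_def by simp
    then have "v \<noteq> replicate d 0" using jd by auto
    moreover have "length v = d" "set v \<subseteq> {-1, 0, 1}" unfolding v vecS_def by auto
    ultimately show "v \<in> {v \<in> directions d. line_contains n d w G p v}"
      using lc unfolding directions_def by auto
  qed
  have inj: "inj_on (vecS p d) GS"
  proof
    fix S1 S2 assume S1: "S1 \<in> GS" and S2: "S2 \<in> GS" and e: "vecS p d S1 = vecS p d S2"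
    have "\<And>j. j \<in> S1 \<longleftrightarrow> j \<in> S2"
    proof -
      fix j
      show "j \<in> S1 \<longleftrightarrow> j \<in> S2"
      proof (cases "j < d")
        case True
        have "vecS p d S1 ! j = vecS p d S2 ! j" using e by simp
        then show ?thesis using True unfolding vecS_def by (auto split: if_splits)
      next
        case False
        then show ?thesis using S1 S2 unfolding GS_def J_def by auto
      qed
    qed
    then show "S1 = S2" by auto
  qed
  have fd: "finite (directions d)"
    by (rule finite_subset[of _ "{v. set v \<subseteq> {-1,0,1::int} \<and> length v = d}"])
       (auto simp: directions_def intro: finite_lists_length_eq)
  have "card GS = card (vecS p d ` GS)" using inj by (simp add: card_image)
  also have "\<dots> \<le> num_lines n d w G p" unfolding num_lines_def
    by (rule card_mono[OF _ sub]) (use fd in auto)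
  finally have "card GS \<le> num_lines n d w G p" .
  moreover have "card GS = (\<Sum>k\<in>{k. k \<le> r \<and> P k}. r choose k)"
    unfolding GS_def using card_subsets_P[OF fJ, of P] cJ by simp
  ultimately have "(\<Sum>k\<in>{k. k \<le> r \<and> P k}. r choose k) \<le> num_lines n d w G p" by simp
  then have "real (\<Sum>k\<in>{k. k \<le> r \<and> P k}. r choose k) \<le> real (num_lines n d w G p)" by (rule of_nat_mono)
  then show ?thesis using sum_filter_real[of r P] by simp
qed

theorem lemma21:
  fixes w :: "'a list" and n d r :: nat and G :: "int list \<Rightarrow> 'a" and p :: "int list"
  assumes "length w = n" and "n \<ge> 3" and "d \<ge> 1"
    and "grid_rules n d w G"
    and "in_grid n d p" and "counter_point n d p" and "tau n 1 p = r"
  shows "real (num_lines n d w G p) \<ge> (1 - 2 * exp (- cval n d / 10000)) * 2 powr (real r - 1) \<and>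
         ((\<forall>i. 1 \<le> i \<and> i \<le> n \<longrightarrow> w ! (i - 1) = w ! (n - i)) \<longrightarrow>
           real (num_lines n d w G p) \<ge> (1 - 2 * exp (- cval n d / 10000)) * 2 ^ r)"
proof -
  define E where "E = exp (- cval n d / 10000)"
  define f where "f k = real (r choose k)" for k
  have r1: "r \<ge> 1" and cr: "cval n d < real r"
  proof -
    have "cval n d > 0" using assms(3) unfolding cval_def by auto
    moreover show "cval n d < real r" using assms(6,7) unfolding counter_point_def by auto
    ultimately show "r \<ge> 1" by linarith
  qed
  have T: "(\<Sum>k\<le>r. if 4*k < r then f k else 0) \<le> 2^r * E"
    using tail_bound[OF cr] sum_filter_real[of r "\<lambda>k. 4*k < r"] unfolding E_def f_def by simp
  have odd: "2 * (\<Sum>k\<le>r. if odd k then f k else 0) = 2^r"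
    unfolding f_def using choose_odd_sum[of r] r1 by simp
  have all: "(\<Sum>k\<le>r. f k) = 2^r"
    unfolding f_def using choose_row_sum[of r] by (metis of_nat_numeral of_nat_power of_nat_sum)
  have GO: "(\<Sum>k\<le>r. if r \<le> 4*k \<and> odd k then f k else 0) \<le> real (num_lines n d w G p)"
    unfolding f_def by (rule count_lb[OF assms]) auto
  have GA: "(\<forall>i. 1 \<le> i \<and> i \<le> n \<longrightarrow> w ! (i - 1) = w ! (n - i)) \<Longrightarrow>
      (\<Sum>k\<le>r. if r \<le> 4*k then f k else 0) \<le> real (num_lines n d w G p)"
    unfolding f_def by (rule count_lb[OF assms]) auto
  have s1: "(\<Sum>k\<le>r. if odd k then f k else 0) \<le> (\<Sum>k\<le>r. if r \<le> 4*k \<and> odd k then f k else 0) + (\<Sum>k\<le>r. if 4*k < r then f k else 0)"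
    unfolding sum.distrib[symmetric] by (intro sum_mono) (auto simp: f_def)
  have s2: "(\<Sum>k\<le>r. f k) = (\<Sum>k\<le>r. if r \<le> 4*k then f k else 0) + (\<Sum>k\<le>r. if 4*k < r then f k else 0)"
    unfolding sum.distrib[symmetric] by (intro sum.cong) auto
  have E0: "E \<ge> 0" unfolding E_def by simp
  have pw: "(2::real) powr (real r - 1) = 2^r / 2" by (simp add: powr_diff powr_realpow)
  have "(1 - 2*E) * 2 powr (real r - 1) = 2^r/2 - 2^r * E" unfolding pw by (simp add: field_simps)
  also have "\<dots> \<le> real (num_lines n d w G p)" using GO s1 odd T by linarith
  finally have P1: "real (num_lines n d w G p) \<ge> (1 - 2*E) * 2 powr (real r - 1)" .
  have P2: "real (num_lines n d w G p) \<ge> (1 - 2*E) * 2^r"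
    if pal: "\<forall>i. 1 \<le> i \<and> i \<le> n \<longrightarrow> w ! (i - 1) = w ! (n - i)"
  proof -
    have "(1 - 2*E) * 2^r \<le> 2^r - 2^r * E" using E0 by (simp add: algebra_simps)
    also have "\<dots> \<le> real (num_lines n d w G p)" using GA[OF pal] s2 all T by linarith
    finally show ?thesis .
  qed
  show ?thesis using P1 P2 unfolding E_def by blast
qed

end
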